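(* For integers $n \geq j \geq k \geq 0$, $$f_{(n,j,k),j+k}(q) = q^{j^2+jk+k^2} \left( \begin{bmatrix} n \\ j \end{bmatrix}_q \begin{bmatrix} n \\ k \end{bmatrix}_q - q^{j-k+1} \begin{bmatrix} n \\ j+1 \end{bmatrix}_q \begin{bmatrix} n \\ k-1 \end{bmatrix}_q \right).$$
   Context: For a partition $\lambda\vdash N$, a standard Young tableau of shape $\lambda$ is a filling of the Ferrers diagram with $1,\dots,N$, increasing along rows and down columns; it has a descent at $m$ if $m+1$ lies in a strictly lower row than $m$; $\mathrm{des}$ is the number of descents and $\mathrm{maj}$ their sum. $f_{\lambda,i}(q)=\sum q^{\mathrm{maj}(\tau)}$ over standard Young tableaux of shape $\lambda$ with $\mathrm{des}(\tau)=i$. The $q$-binomial coefficient is $\frac{(q)_M}{(q)_N(q)_{M-N}}$, $(q)_m=(1-q)\cdots(1-q^m)$, for integers $0\le N\le M$, and $0$ otherwise. *)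

theory Defs
  imports "HOL-Computational_Algebra.Polynomial"
begin

text \<open>A partition is given as a (weakly decreasing) list of row lengths; row r
  (0-based) of the Ferrers diagram has the cells (r,c) with c < lam ! r.\<close>

definition cells :: "nat list \<Rightarrow> (nat \<times> nat) set" where
  "cells lam = {(r, c). r < length lam \<and> c < lam ! r}"

text \<open>Standard Young tableaux of shape lam: bijective fillings of the diagram
  with 1..N, increasing along rows and down columns (extended by 0 outside the
  diagram, so that the set of tableaux is finite).\<close>

definition syt :: "nat list \<Rightarrow> (nat \<times> nat \<Rightarrow> nat) set" where
  "syt lam = {T. bij_betw T (cells lam) {1..sum_list lam}
      \<and> (\<forall>x. x \<notin> cells lam \<longrightarrow> T x = 0)
      \<and> (\<forall>r c. (r, Suc c) \<in> cells lam \<longrightarrow> T (r, c) < T (r, Suc c))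
      \<and> (\<forall>r c. (Suc r, c) \<in> cells lam \<longrightarrow> T (r, c) < T (Suc r, c))}"

definition row_of :: "nat list \<Rightarrow> (nat \<times> nat \<Rightarrow> nat) \<Rightarrow> nat \<Rightarrow> nat" where
  "row_of lam T m = fst (the_inv_into (cells lam) T m)"

definition descents :: "nat list \<Rightarrow> (nat \<times> nat \<Rightarrow> nat) \<Rightarrow> nat set" where
  "descents lam T = {m. 1 \<le> m \<and> m < sum_list lam \<and> row_of lam T m < row_of lam T (Suc m)}"

definition des :: "nat list \<Rightarrow> (nat \<times> nat \<Rightarrow> nat) \<Rightarrow> nat" where
  "des lam T = card (descents lam T)"

definition maj :: "nat list \<Rightarrow> (nat \<times> nat \<Rightarrow> nat) \<Rightarrow> nat" where
  "maj lam T = \<Sum> (descents lam T)"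

definition fpoly :: "nat list \<Rightarrow> nat \<Rightarrow> rat poly" where
  "fpoly lam i = (\<Sum>T\<in>{T \<in> syt lam. des lam T = i}. monom 1 (maj lam T))"

definition qpoch :: "nat \<Rightarrow> rat poly" where
  "qpoch m = (\<Prod>i\<in>{1..m}. 1 - monom 1 i)"

definition qbinom :: "int \<Rightarrow> int \<Rightarrow> rat poly" where
  "qbinom M N = (if 0 \<le> N \<and> N \<le> M
     then qpoch (nat M) div (qpoch (nat N) * qpoch (nat (M - N))) else 0)"

end

theory Submission
  imports Defs
begin


fun qb :: "nat \<Rightarrow> nat \<Rightarrow> rat poly" where
  "qb n 0 = 1"
| "qb 0 (Suc k) = 0"
| "qb (Suc n) (Suc k) = qb n (Suc k) + monom 1 (n - k) * qb n k"

lemma qb_zero: "n < k \<Longrightarrow> qb n k = 0"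
proof (induction n arbitrary: k)
  case 0 then show ?case by (cases k) auto
next
  case (Suc n) then show ?case by (cases k) auto
qed

lemma qpoch_Suc: "qpoch (Suc n) = qpoch n * (1 - monom 1 (Suc n))"
  unfolding qpoch_def by (simp add: atLeastAtMostSuc_conv mult.commute)

lemma qpoch_0: "qpoch 0 = 1" unfolding qpoch_def by simp

lemma qpoch_nz: "qpoch n \<noteq> 0"
proof (induction n)
  case 0 then show ?case by (simp add: qpoch_0)
next
  case (Suc n)
  have "coeff (1 - monom (1::rat) (Suc n)) 0 = 1" by simp
  then have "1 - monom (1::rat) (Suc n) \<noteq> 0" by (metis coeff_0 one_neq_zero)
  with Suc show ?case by (simp add: qpoch_Suc)
qed

lemma qb_prod: "k \<le> n \<Longrightarrow> qb n k * qpoch k * qpoch (n - k) = qpoch n"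
proof (induction n arbitrary: k)
  case 0 then show ?case by (simp add: qpoch_0)
next
  case (Suc n)
  show ?case
  proof (cases k)
    case 0 then show ?thesis by (simp add: qpoch_0)
  next
    case (Suc k')
    have k': "k' \<le> n" using Suc.prems Suc by simp
    have A: "qb n k' * qpoch (Suc k') * qpoch (n - k') = qpoch n * (1 - monom 1 (Suc k'))"
      using Suc.IH[OF k'] by (simp add: qpoch_Suc algebra_simps)
    have B: "qb n (Suc k') * qpoch (Suc k') * qpoch (n - k') = qpoch n * (1 - monom 1 (n - k'))"
    proof (cases "k' = n")
      case True then show ?thesis by (simp add: qb_zero)
    next
      case False
      then have le: "Suc k' \<le> n" using k' by simp
      then have "n - k' = Suc (n - Suc k')" by simp
      then have "qpoch (n - k') = qpoch (n - Suc k') * (1 - monom 1 (n - k'))"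
        by (simp add: qpoch_Suc)
      then have "qb n (Suc k') * qpoch (Suc k') * qpoch (n - k') = (qb n (Suc k') * qpoch (Suc k') * qpoch (n - Suc k')) * (1 - monom 1 (n - k'))"
        by (metis mult.assoc)
      also have "\<dots> = qpoch n * (1 - monom 1 (n - k'))" using Suc.IH[OF le] by simp
      finally show ?thesis .
    qed
    have "qb (Suc n) k * qpoch k * qpoch (Suc n - k)
        = qb n (Suc k') * qpoch (Suc k') * qpoch (n - k')
          + monom 1 (n - k') * (qb n k' * qpoch (Suc k') * qpoch (n - k'))"
      using Suc by (simp add: algebra_simps)
    also have "\<dots> = qpoch n * (1 - monom 1 (n - k')) + monom 1 (n - k') * (qpoch n * (1 - monom 1 (Suc k')))"
      using A B by simp
    also have "\<dots> = qpoch n * (1 - monom 1 (n - k') * monom 1 (Suc k'))"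
      by (simp add: algebra_simps)
    also have "\<dots> = qpoch (Suc n)"
      using k' by (simp add: mult_monom qpoch_Suc)
    finally show ?thesis .
  qed
qed

definition QB :: "nat \<Rightarrow> int \<Rightarrow> rat poly" where
  "QB n j = (if j < 0 then 0 else qb n (nat j))"

lemma qbinom_QB: "qbinom (int n) j = QB n j"
proof -
  consider "j < 0" | "0 \<le> j" "j \<le> int n" | "int n < j" by linarith
  then show ?thesis
  proof cases
    case 1 then show ?thesis by (simp add: qbinom_def QB_def)
  next
    case 2
    obtain k where k0: "j = int k" using 2(1) nonneg_int_cases by blast
    then have k: "j = int k" "k \<le> n" using 2 by auto
    have "qpoch n = qb n k * (qpoch k * qpoch (n - k))" using qb_prod[OF k(2)] by (simp add: algebra_simps)
    moreover have "qpoch k * qpoch (n - k) \<noteq> 0" using qpoch_nz by simp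
    ultimately have "qpoch n div (qpoch k * qpoch (n - k)) = qb n k"
      by (simp del: div_mult_self1 div_mult_self2)
    then show ?thesis using k by (simp add: qbinom_def QB_def nat_diff_distrib)
  next
    case 3 then show ?thesis by (simp add: qbinom_def QB_def qb_zero nat_less_iff)
  qed
qed

lemma QB_0: "QB 0 j = (if j = 0 then 1 else 0)"
  unfolding QB_def by (cases "nat j") auto

lemma QB_nz: assumes "QB m i \<noteq> 0" shows "0 \<le> i \<and> i \<le> int m"
proof -
  have a: "\<not> i < 0" using assms by (auto simp: QB_def)
  moreover have "\<not> m < nat i" using assms a qb_zero by (auto simp: QB_def)
  ultimately show ?thesis by (simp add: not_less nat_le_iff)
qed

lemma QB_Pascal: "QB (Suc m) j = QB m j + monom 1 (nat (int (Suc m) - j)) * QB m (j - 1)"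
proof -
  have "j < 0 \<or> j = 0 \<or> j = int (Suc (nat j - 1))" by linarith
  then consider "j < 0" | "j = 0" | k where "j = int (Suc k)" by blast
  then show ?thesis
  proof cases
    case 1 then show ?thesis by (simp add: QB_def)
  next
    case 2 then show ?thesis by (simp add: QB_def)
  next
    case 3
    have "nat (int (Suc m) - j) = m - k" using 3 by simp
    moreover have "nat (j - 1) = k" using 3 by simp
    ultimately show ?thesis using 3 by (simp add: QB_def del: of_nat_Suc)
  qed
qed


definition ee :: "int \<Rightarrow> int \<Rightarrow> int" where "ee j k = j^2 + j*k + k^2"

lemma ee_nonneg: "0 \<le> ee j k"
proof -
  have "0 \<le> j^2 + k^2 + (j+k)^2" by simp
  moreover have "j^2 + k^2 + (j+k)^2 = 2 * ee j k" unfolding ee_def by (simp add: power2_eq_square algebra_simps)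
  ultimately show ?thesis by simp
qed

definition PP :: "nat \<Rightarrow> int \<Rightarrow> int \<Rightarrow> rat poly" where
  "PP n j k = monom 1 (nat (ee j k)) * QB n j * QB n k"

lemma nat_sum_eq: "0 \<le> (x::int) \<Longrightarrow> 0 \<le> y \<Longrightarrow> 0 \<le> z \<Longrightarrow> 0 \<le> w \<Longrightarrow> x + y = z + w \<Longrightarrow> nat x + nat y = nat z + nat w"
  by (simp add: nat_add_distrib[symmetric])

lemma monom_swap: assumes "0 \<le> (x::int)" "0 \<le> y" "0 \<le> z" "0 \<le> w" "x + y = z + w" shows
  "monom (1::rat) (nat x) * monom 1 (nat y) = monom 1 (nat z) * monom 1 (nat w)"
proof -
  have "nat x + nat y = nat z + nat w" by (rule nat_sum_eq[OF assms])
  then show ?thesis by (simp add: mult_monom)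
qed

lemma term2:
  "monom 1 (nat (ee j k)) * monom 1 (nat (int (Suc m) - j)) * (QB m (j - 1) * QB m k)
   = monom 1 (nat (int (Suc m) + j + k - 1)) * PP m (j - 1) k"
proof (cases "QB m (j - 1) * QB m k = 0")
  case True then have "QB m (j - 1) = 0 \<or> QB m k = 0" by simp
  then show ?thesis by (auto simp add: PP_def)
next
  case False
  then have q1: "QB m (j - 1) \<noteq> 0" "QB m k \<noteq> 0" by auto
  have b: "0 \<le> j - 1" "j - 1 \<le> int m" "0 \<le> k" "k \<le> int m" using QB_nz[OF q1(1)] QB_nz[OF q1(2)] by auto
  have "monom 1 (nat (ee j k)) * monom 1 (nat (int (Suc m) - j)) = monom (1::rat) (nat (int (Suc m) + j + k - 1)) * monom 1 (nat (ee (j - 1) k))"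
    by (rule monom_swap) (use b ee_nonneg[of "j-1" k] ee_nonneg[of j k] in \<open>simp_all add: ee_def power2_eq_square algebra_simps\<close>)
  then show ?thesis unfolding PP_def by (simp add: algebra_simps)
qed

lemma term3:
  "monom 1 (nat (ee j k)) * monom 1 (nat (int (Suc m) - k)) * (QB m j * QB m (k - 1))
   = monom 1 (nat (int (Suc m) + j + k - 1)) * PP m j (k - 1)"
proof (cases "QB m j * QB m (k - 1) = 0")
  case True then have "QB m j = 0 \<or> QB m (k - 1) = 0" by simp
  then show ?thesis by (auto simp add: PP_def)
next
  case False
  then have q1: "QB m j \<noteq> 0" "QB m (k - 1) \<noteq> 0" by auto
  have b: "0 \<le> k - 1" "k - 1 \<le> int m" "0 \<le> j" "j \<le> int m" using QB_nz[OF q1(1)] QB_nz[OF q1(2)] by auto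
  have "monom 1 (nat (ee j k)) * monom 1 (nat (int (Suc m) - k)) = monom (1::rat) (nat (int (Suc m) + j + k - 1)) * monom 1 (nat (ee j (k - 1)))"
    by (rule monom_swap) (use b ee_nonneg[of j "k-1"] ee_nonneg[of j k] in \<open>simp_all add: ee_def power2_eq_square algebra_simps\<close>)
  then show ?thesis unfolding PP_def by (simp add: algebra_simps)
qed

lemma term4:
  "monom 1 (nat (ee j k)) * monom 1 (nat (int (Suc m) - j)) * monom 1 (nat (int (Suc m) - k)) * (QB m (j - 1) * QB m (k - 1))
   = monom 1 (nat (2 * (int (Suc m) + j + k) - 3)) * PP m (j - 1) (k - 1)"
proof (cases "QB m (j - 1) * QB m (k - 1) = 0")
  case True then have "QB m (j - 1) = 0 \<or> QB m (k - 1) = 0" by simp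
  then show ?thesis by (auto simp add: PP_def)
next
  case False
  then have q1: "QB m (j - 1) \<noteq> 0" "QB m (k - 1) \<noteq> 0" by auto
  have b: "0 \<le> k - 1" "k - 1 \<le> int m" "0 \<le> j - 1" "j - 1 \<le> int m" using QB_nz[OF q1(1)] QB_nz[OF q1(2)] by auto
  have "monom 1 (nat (ee j k)) * monom 1 (nat (int (Suc m) - j)) * monom 1 (nat (int (Suc m) - k))
      = monom (1::rat) (nat (ee j k) + nat (int (Suc m) - j) + nat (int (Suc m) - k))"
    by (simp add: mult_monom)
  also have "nat (ee j k) + nat (int (Suc m) - j) + nat (int (Suc m) - k) = nat (2 * (int (Suc m) + j + k) - 3) + nat (ee (j - 1) (k - 1))"
    using b ee_nonneg[of j k] ee_nonneg[of "j-1" "k-1"]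
    by (simp add: ee_def power2_eq_square algebra_simps nat_add_distrib[symmetric])
  finally show ?thesis unfolding PP_def by (simp add: mult_monom algebra_simps)
qed

lemma PP_rec:
  "PP (Suc m) j k = PP m j k + monom 1 (nat (int (Suc m) + j + k - 1)) * PP m (j - 1) k
     + monom 1 (nat (int (Suc m) + j + k - 1)) * PP m j (k - 1)
     + monom 1 (nat (2 * (int (Suc m) + j + k) - 3)) * PP m (j - 1) (k - 1)"
proof -
  let ?e = "monom (1::rat) (nat (ee j k))" and ?x = "monom (1::rat) (nat (int (Suc m) - j))"
    and ?y = "monom (1::rat) (nat (int (Suc m) - k))"
  have "PP (Suc m) j k = ?e * (QB m j + ?x * QB m (j - 1)) * (QB m k + ?y * QB m (k - 1))"
    unfolding PP_def QB_Pascal ..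
  also have "\<dots> = ?e * (QB m j * QB m k) + ?e * ?x * (QB m (j - 1) * QB m k) + ?e * ?y * (QB m j * QB m (k - 1))
      + ?e * ?x * ?y * (QB m (j - 1) * QB m (k - 1))"
    by (simp add: algebra_simps)
  also have "\<dots> = PP m j k + monom 1 (nat (int (Suc m) + j + k - 1)) * PP m (j - 1) k
     + monom 1 (nat (int (Suc m) + j + k - 1)) * PP m j (k - 1)
     + monom 1 (nat (2 * (int (Suc m) + j + k) - 3)) * PP m (j - 1) (k - 1)"
    unfolding term2 term3 term4 by (simp add: PP_def algebra_simps)
  finally show ?thesis .
qed

definition GG :: "nat \<Rightarrow> int \<Rightarrow> int \<Rightarrow> rat poly" where
  "GG n j k = PP n j k - PP n (j + 1) (k - 1)"

lemma GG_rec: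
  "GG (Suc m) j k = GG m j k + monom 1 (nat (int (Suc m) + j + k - 1)) * GG m (j - 1) k
     + monom 1 (nat (int (Suc m) + j + k - 1)) * GG m j (k - 1)
     + monom 1 (nat (2 * (int (Suc m) + j + k) - 3)) * GG m (j - 1) (k - 1)"
proof -
  have "PP (Suc m) (j + 1) (k - 1) = PP m (j+1) (k-1) + monom 1 (nat (int (Suc m) + j + k - 1)) * PP m j (k - 1)
     + monom 1 (nat (int (Suc m) + j + k - 1)) * PP m (j + 1) (k - 1 - 1)
     + monom 1 (nat (2 * (int (Suc m) + j + k) - 3)) * PP m j (k - 1 - 1)"
    using PP_rec[of m "j+1" "k-1"] by (simp add: algebra_simps)
  then show ?thesis unfolding GG_def PP_rec[of m j k] by (simp add: algebra_simps)
qed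

lemma GG_z1: "GG m (int m + 1) k = 0"
  unfolding GG_def PP_def QB_def by (simp add: qb_zero nat_add_distrib)

lemma GG_z2: "GG m j (j + 1) = 0"
  unfolding GG_def PP_def by (simp add: ee_def algebra_simps power2_eq_square)

lemma GG_z3: "GG m j (-1) = 0"
  unfolding GG_def PP_def QB_def by simp



definition partition :: "nat list \<Rightarrow> bool" where
  "partition lam \<longleftrightarrow> (\<forall>i. Suc i < length lam \<longrightarrow> lam ! Suc i \<le> lam ! i)"

definition corner :: "nat list \<Rightarrow> nat \<Rightarrow> bool" where
  "corner lam r \<longleftrightarrow> r < length lam \<and> 0 < lam ! r \<and> (Suc r < length lam \<longrightarrow> lam ! Suc r < lam ! r)"

definition dec :: "nat list \<Rightarrow> nat \<Rightarrow> nat list" where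
  "dec lam r = lam[r := lam ! r - 1]"

lemma cells_dec: "r < length lam \<Longrightarrow> 0 < lam ! r \<Longrightarrow> cells (dec lam r) = cells lam - {(r, lam ! r - 1)}"
  unfolding cells_def dec_def by (auto simp: nth_list_update split: if_splits)

lemma sum_dec: "r < length lam \<Longrightarrow> 0 < lam ! r \<Longrightarrow> sum_list (dec lam r) = sum_list lam - 1"
  unfolding dec_def using sum_list_update[of r lam "lam ! r - 1"] elem_le_sum_list[of r lam] by simp

lemma length_dec[simp]: "length (dec lam r) = length lam"
  unfolding dec_def by simp

lemma partition_dec: "partition lam \<Longrightarrow> corner lam r \<Longrightarrow> partition (dec lam r)"
  unfolding partition_def corner_def dec_def
  by (auto simp: nth_list_update)

lemma syt_bij: "T \<in> syt lam \<Longrightarrow> bij_betw T (cells lam) {1..sum_list lam}"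
  by (simp add: syt_def)

lemma syt_out: "T \<in> syt lam \<Longrightarrow> x \<notin> cells lam \<Longrightarrow> T x = 0"
  by (cases x) (simp add: syt_def)

lemma syt_row: "T \<in> syt lam \<Longrightarrow> (r, Suc c) \<in> cells lam \<Longrightarrow> T (r, c) < T (r, Suc c)"
  by (simp add: syt_def)

lemma syt_col: "T \<in> syt lam \<Longrightarrow> (Suc r, c) \<in> cells lam \<Longrightarrow> T (r, c) < T (Suc r, c)"
  by (simp add: syt_def)

lemma syt_val: "T \<in> syt lam \<Longrightarrow> x \<in> cells lam \<Longrightarrow> T x \<in> {1..sum_list lam}"
  using syt_bij bij_betw_apply by metis

lemma finite_cells: "finite (cells lam)"
proof -
  have "cells lam \<subseteq> {..<length lam} \<times> {..<sum_list lam}"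
  proof
    fix x assume "x \<in> cells lam"
    then obtain r c where x: "x = (r, c)" "r < length lam" "c < lam ! r" by (auto simp: cells_def)
    then show "x \<in> {..<length lam} \<times> {..<sum_list lam}" using elem_le_sum_list[of r lam] by simp
  qed
  then show ?thesis by (rule finite_subset) simp
qed

lemma finite_syt: "finite (syt lam)"
proof -
  have "syt lam \<subseteq> {f. \<forall>x. (x \<in> cells lam \<longrightarrow> f x \<in> {1..sum_list lam}) \<and> (x \<notin> cells lam \<longrightarrow> f x = 0)}"
    using syt_val syt_out by auto
  then show ?thesis by (rule finite_subset) (rule finite_set_of_finite_funs, rule finite_cells, simp)
qed

lemma syt_inv:
  assumes "T \<in> syt lam" "m \<in> {1..sum_list lam}"
  shows "the_inv_into (cells lam) T m \<in> cells lam" "T (the_inv_into (cells lam) T m) = m"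
proof -
  have b: "bij_betw T (cells lam) {1..sum_list lam}" using assms(1) by (rule syt_bij)
  then have "inj_on T (cells lam)" "T ` cells lam = {1..sum_list lam}" by (auto simp: bij_betw_def)
  then show "the_inv_into (cells lam) T m \<in> cells lam" "T (the_inv_into (cells lam) T m) = m"
    using assms(2) by (auto intro: the_inv_into_into f_the_inv_into_f)
qed

lemma syt_inj: "T \<in> syt lam \<Longrightarrow> inj_on T (cells lam)"
  using syt_bij bij_betw_def by blast

lemma syt_corner:
  assumes T: "T \<in> syt lam" and N: "sum_list lam = Suc M"
  defines "x \<equiv> the_inv_into (cells lam) T (Suc M)"
  shows "corner lam (fst x)" "x = (fst x, lam ! fst x - 1)" "T x = Suc M" "x \<in> cells lam"
proof -
  have xc: "x \<in> cells lam" and Tx: "T x = Suc M" using syt_inv[OF T, of "Suc M"] N by (auto simp: x_def)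
  then obtain r s where x: "x = (r, s)" "r < length lam" "s < lam ! r" by (auto simp: cells_def)
  have 1: "(r, Suc s) \<notin> cells lam"
  proof
    assume a: "(r, Suc s) \<in> cells lam"
    have "T (r, s) < T (r, Suc s)" by (rule syt_row[OF T a])
    moreover have "T (r, Suc s) \<le> Suc M" using syt_val[OF T a] N by simp
    ultimately show False using Tx x by simp
  qed
  then have s: "s = lam ! r - 1" using x by (auto simp: cells_def)
  have 2: "Suc r < length lam \<longrightarrow> lam ! Suc r < lam ! r"
  proof
    assume l: "Suc r < length lam"
    show "lam ! Suc r < lam ! r"
    proof (rule ccontr)
      assume "\<not> lam ! Suc r < lam ! r"
      then have a: "(Suc r, s) \<in> cells lam" using x l by (auto simp: cells_def)
      have "T (r, s) < T (Suc r, s)" by (rule syt_col[OF T a])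
      moreover have "T (Suc r, s) \<le> Suc M" using syt_val[OF T a] N by simp
      ultimately show False using Tx x by simp
    qed
  qed
  show "corner lam (fst x)" using x 2 by (auto simp: corner_def)
  show "x = (fst x, lam ! fst x - 1)" using x s by simp
  show "T x = Suc M" by (rule Tx)
  show "x \<in> cells lam" by (rule xc)
qed

lemma cells_dec_mem: "corner lam r \<Longrightarrow> y \<in> cells lam \<Longrightarrow> y \<noteq> (r, lam ! r - 1) \<Longrightarrow> y \<in> cells (dec lam r)"
  using cells_dec[of r lam] by (auto simp: corner_def)

lemma cells_dec_sub: "corner lam r \<Longrightarrow> y \<in> cells (dec lam r) \<Longrightarrow> y \<in> cells lam \<and> y \<noteq> (r, lam ! r - 1)"
  using cells_dec[of r lam] by (auto simp: corner_def)

lemma corner_cell: "corner lam r \<Longrightarrow> (r, lam ! r - 1) \<in> cells lam"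
  by (auto simp: corner_def cells_def)

lemma corner_below: "corner lam r \<Longrightarrow> (Suc r, lam ! r - 1) \<notin> cells lam"
  by (auto simp: corner_def cells_def)

lemma corner_right: "(r, Suc (lam ! r - 1)) \<notin> cells lam"
  by (auto simp: cells_def)

lemma partition_up: "partition lam \<Longrightarrow> (Suc r, c) \<in> cells lam \<Longrightarrow> (r, c) \<in> cells lam"
  by (auto simp: partition_def cells_def)

lemma row_left: "(r, Suc c) \<in> cells lam \<Longrightarrow> (r, c) \<in> cells lam"
  by (auto simp: cells_def)

lemma sum_dec': "corner lam r \<Longrightarrow> sum_list lam = Suc M \<Longrightarrow> sum_list (dec lam r) = M"
  using sum_dec[of r lam] by (simp add: corner_def)

lemma syt_remove:
  assumes T: "T \<in> syt lam" and p: "partition lam" and c: "corner lam r"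
    and x: "x = (r, lam ! r - 1)" and Tx: "T x = Suc M" and N: "sum_list lam = Suc M"
  shows "T(x := 0) \<in> syt (dec lam r)"
proof -
  have cd: "cells (dec lam r) = cells lam - {x}" using cells_dec[of r lam] c x by (simp add: corner_def)
  have sd: "sum_list (dec lam r) = M" using sum_dec'[OF c N] .
  have xc: "x \<in> cells lam" using corner_cell[OF c] x by simp
  have b1: "bij_betw T (cells lam - {x}) ({1..Suc M} - {Suc M})"
    by (rule bij_betw_DiffI[OF syt_bij[OF T, unfolded N]]) (use Tx xc in auto)
  have "{1..Suc M} - {Suc M} = {1..M}" by auto
  then have b2: "bij_betw (T(x := 0)) (cells (dec lam r)) {1..sum_list (dec lam r)}"
  proof -
    have "bij_betw (T(x := 0)) (cells lam - {x}) {1..M} = bij_betw T (cells lam - {x}) {1..M}"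
      by (rule bij_betw_cong) simp
    then show ?thesis using b1 cd sd \<open>{1..Suc M} - {Suc M} = {1..M}\<close> by simp
  qed
  have o: "\<forall>y. y \<notin> cells (dec lam r) \<longrightarrow> (T(x := 0)) y = 0"
    using cd syt_out[OF T] by auto
  have rw: "\<forall>r' c'. (r', Suc c') \<in> cells (dec lam r) \<longrightarrow> (T(x := 0)) (r', c') < (T(x := 0)) (r', Suc c')"
  proof (intro allI impI)
    fix r' c' assume a: "(r', Suc c') \<in> cells (dec lam r)"
    then have a1: "(r', Suc c') \<in> cells lam" "(r', Suc c') \<noteq> x" using cd by auto
    have a2: "(r', c') \<in> cells lam" using row_left[OF a1(1)] .
    have a3: "(r', c') \<noteq> x" using a1(1) x corner_right[of r lam] by auto
    show "(T(x := 0)) (r', c') < (T(x := 0)) (r', Suc c')"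
      using syt_row[OF T a1(1)] a1 a3 by simp
  qed
  have cl: "\<forall>r' c'. (Suc r', c') \<in> cells (dec lam r) \<longrightarrow> (T(x := 0)) (r', c') < (T(x := 0)) (Suc r', c')"
  proof (intro allI impI)
    fix r' c' assume a: "(Suc r', c') \<in> cells (dec lam r)"
    then have a1: "(Suc r', c') \<in> cells lam" "(Suc r', c') \<noteq> x" using cd by auto
    have a3: "(r', c') \<noteq> x" using a1(1) x corner_below[OF c] by auto
    show "(T(x := 0)) (r', c') < (T(x := 0)) (Suc r', c')"
      using syt_col[OF T a1(1)] a1 a3 by simp
  qed
  show ?thesis unfolding syt_def using b2 o rw cl by blast
qed

lemma syt_addc:
  assumes T': "T' \<in> syt (dec lam r)" and p: "partition lam" and c: "corner lam r"
    and x: "x = (r, lam ! r - 1)" and N: "sum_list lam = Suc M"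
  shows "T'(x := Suc M) \<in> syt lam"
proof -
  have cd: "cells (dec lam r) = cells lam - {x}" using cells_dec[of r lam] c x by (simp add: corner_def)
  have sd: "sum_list (dec lam r) = M" using sum_dec'[OF c N] .
  have xc: "x \<in> cells lam" using corner_cell[OF c] x by simp
  have vT': "\<And>y. y \<in> cells lam - {x} \<Longrightarrow> T' y \<in> {1..M}" using syt_val[OF T'] cd sd by auto
  have b1: "bij_betw (T'(x := Suc M)) (cells lam - {x}) {1..M}"
  proof -
    have "bij_betw (T'(x := Suc M)) (cells lam - {x}) {1..M} = bij_betw T' (cells lam - {x}) {1..M}"
      by (rule bij_betw_cong) simp
    then show ?thesis using syt_bij[OF T'] cd sd by simp
  qed
  have b2: "bij_betw (T'(x := Suc M)) ((cells lam - {x}) \<union> {x}) ({1..M} \<union> {(T'(x := Suc M)) x})"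
    by (rule notIn_Un_bij_betw[OF _ _ b1]) auto
  have "(cells lam - {x}) \<union> {x} = cells lam" using xc by auto
  moreover have "{1..M} \<union> {(T'(x := Suc M)) x} = {1..sum_list lam}" using N by auto
  ultimately have b: "bij_betw (T'(x := Suc M)) (cells lam) {1..sum_list lam}" using b2 by simp
  have o: "\<forall>y. y \<notin> cells lam \<longrightarrow> (T'(x := Suc M)) y = 0"
    using cd syt_out[OF T'] xc by auto
  have rw: "\<forall>r' c'. (r', Suc c') \<in> cells lam \<longrightarrow> (T'(x := Suc M)) (r', c') < (T'(x := Suc M)) (r', Suc c')"
  proof (intro allI impI)
    fix r' c' assume a1: "(r', Suc c') \<in> cells lam"
    have a2: "(r', c') \<in> cells lam" using row_left[OF a1] .
    have a3: "(r', c') \<noteq> x" using a1 x corner_right[of r lam] by auto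
    have a4: "(r', c') \<in> cells (dec lam r)" using a2 a3 cd by auto
    show "(T'(x := Suc M)) (r', c') < (T'(x := Suc M)) (r', Suc c')"
    proof (cases "(r', Suc c') = x")
      case True then show ?thesis using a3 vT'[of "(r', c')"] a2 by auto
    next
      case False
      then have "(r', Suc c') \<in> cells (dec lam r)" using a1 cd by auto
      then show ?thesis using syt_row[OF T'] False a3 by simp
    qed
  qed
  have cl: "\<forall>r' c'. (Suc r', c') \<in> cells lam \<longrightarrow> (T'(x := Suc M)) (r', c') < (T'(x := Suc M)) (Suc r', c')"
  proof (intro allI impI)
    fix r' c' assume a1: "(Suc r', c') \<in> cells lam"
    have a2: "(r', c') \<in> cells lam" using partition_up[OF p a1] .
    have a3: "(r', c') \<noteq> x" using a1 x corner_below[OF c] by auto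
    show "(T'(x := Suc M)) (r', c') < (T'(x := Suc M)) (Suc r', c')"
    proof (cases "(Suc r', c') = x")
      case True then show ?thesis using a3 vT'[of "(r', c')"] a2 by auto
    next
      case False
      then have "(Suc r', c') \<in> cells (dec lam r)" using a1 cd by auto
      then show ?thesis using syt_col[OF T'] False a3 by simp
    qed
  qed
  show ?thesis unfolding syt_def using b o rw cl by blast
qed

lemma inv_add:
  assumes T': "T' \<in> syt (dec lam r)" and p: "partition lam" and c: "corner lam r"
    and x: "x = (r, lam ! r - 1)" and N: "sum_list lam = Suc M"
  shows "the_inv_into (cells lam) (T'(x := Suc M)) (Suc M) = x"
    and "\<And>m. 1 \<le> m \<Longrightarrow> m \<le> M \<Longrightarrow> the_inv_into (cells lam) (T'(x := Suc M)) m = the_inv_into (cells (dec lam r)) T' m"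
proof -
  have T: "T'(x := Suc M) \<in> syt lam" by (rule syt_addc[OF T' p c x N])
  have inj: "inj_on (T'(x := Suc M)) (cells lam)" by (rule syt_inj[OF T])
  have xc: "x \<in> cells lam" using corner_cell[OF c] x by simp
  show "the_inv_into (cells lam) (T'(x := Suc M)) (Suc M) = x"
    by (rule the_inv_into_f_eq[OF inj _ xc]) simp
  fix m assume m: "1 \<le> m" "m \<le> M"
  have sd: "sum_list (dec lam r) = M" using sum_dec'[OF c N] .
  let ?y = "the_inv_into (cells (dec lam r)) T' m"
  have y: "?y \<in> cells (dec lam r)" "T' ?y = m" using syt_inv[OF T', of m] sd m by auto
  have y2: "?y \<in> cells lam" "?y \<noteq> x" using cells_dec_sub[OF c y(1)] x by auto
  show "the_inv_into (cells lam) (T'(x := Suc M)) m = ?y"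
    by (rule the_inv_into_f_eq[OF inj _ y2(1)]) (use y y2 in simp)
qed

lemma descents_add:
  assumes T': "T' \<in> syt (dec lam r)" and p: "partition lam" and c: "corner lam r"
    and x: "x = (r, lam ! r - 1)" and N: "sum_list lam = Suc M"
  shows "descents lam (T'(x := Suc M)) = descents (dec lam r) T' \<union>
     (if 1 \<le> M \<and> row_of (dec lam r) T' M < r then {M} else {})"
proof -
  have sd: "sum_list (dec lam r) = M" using sum_dec'[OF c N] .
  have rN: "row_of lam (T'(x := Suc M)) (Suc M) = r" unfolding row_of_def using inv_add(1)[OF assms] x by simp
  have rm: "\<And>m. 1 \<le> m \<Longrightarrow> m \<le> M \<Longrightarrow> row_of lam (T'(x := Suc M)) m = row_of (dec lam r) T' m"
    unfolding row_of_def using inv_add(2)[OF assms] by simp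
  show ?thesis
  proof (rule set_eqI)
    fix m
    consider "m < M" | "m = M" | "M < m" by linarith
    then show "m \<in> descents lam (T'(x := Suc M)) \<longleftrightarrow> m \<in> descents (dec lam r) T' \<union>
     (if 1 \<le> M \<and> row_of (dec lam r) T' M < r then {M} else {})"
    proof cases
      case 1
      then show ?thesis unfolding descents_def using rm[of m] rm[of "Suc m"] N sd by auto
    next
      case 2
      then show ?thesis unfolding descents_def using rm[of m] rN N sd by auto
    next
      case 3
      then show ?thesis unfolding descents_def using N sd by auto
    qed
  qed
qed

lemma finite_descents: "finite (descents lam T)"
  unfolding descents_def by (rule finite_subset[of _ "{..<sum_list lam}"]) auto

lemma des_maj_add:
  assumes T': "T' \<in> syt (dec lam r)" and p: "partition lam" and c: "corner lam r"
    and x: "x = (r, lam ! r - 1)" and N: "sum_list lam = Suc M"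
  defines "cc \<equiv> 1 \<le> M \<and> row_of (dec lam r) T' M < r"
  shows "des lam (T'(x := Suc M)) = des (dec lam r) T' + (if cc then 1 else 0)"
    and "maj lam (T'(x := Suc M)) = maj (dec lam r) T' + (if cc then M else 0)"
proof -
  have sd: "sum_list (dec lam r) = M" using sum_dec'[OF c N] .
  have nM: "M \<notin> descents (dec lam r) T'" unfolding descents_def using sd by simp
  have f: "finite (descents (dec lam r) T')" by (rule finite_descents)
  have D: "descents lam (T'(x := Suc M)) = descents (dec lam r) T' \<union> (if cc then {M} else {})"
    using descents_add[OF assms(1-5)] by (simp add: cc_def)
  show "des lam (T'(x := Suc M)) = des (dec lam r) T' + (if cc then 1 else 0)"
    unfolding des_def D using nM f by (auto)
  show "maj lam (T'(x := Suc M)) = maj (dec lam r) T' + (if cc then M else 0)"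
    unfolding maj_def D using nM f by (auto simp: sum.insert)
qed

lemma syt_decomp:
  assumes p: "partition lam" and N: "sum_list lam = Suc M"
  shows "syt lam = (\<Union>r\<in>{r. corner lam r}. (\<lambda>T'. T'((r, lam ! r - 1) := Suc M)) ` syt (dec lam r))"
proof
  show "syt lam \<subseteq> (\<Union>r\<in>{r. corner lam r}. (\<lambda>T'. T'((r, lam ! r - 1) := Suc M)) ` syt (dec lam r))"
  proof
    fix T assume T: "T \<in> syt lam"
    define x where "x = the_inv_into (cells lam) T (Suc M)"
    note cr = syt_corner[OF T N, folded x_def]
    define r where "r = fst x"
    have x: "x = (r, lam ! r - 1)" using cr(2) r_def by simp
    have c: "corner lam r" using cr(1) r_def by simp
    have T0: "T(x := 0) \<in> syt (dec lam r)" by (rule syt_remove[OF T p c x cr(3) N])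
    have "T = (T(x := 0))(x := Suc M)" using cr(3) by auto
    then show "T \<in> (\<Union>r\<in>{r. corner lam r}. (\<lambda>T'. T'((r, lam ! r - 1) := Suc M)) ` syt (dec lam r))"
      using T0 c x by blast
  qed
next
  show "(\<Union>r\<in>{r. corner lam r}. (\<lambda>T'. T'((r, lam ! r - 1) := Suc M)) ` syt (dec lam r)) \<subseteq> syt lam"
    using syt_addc[OF _ p _ refl N] by blast
qed

lemma sum_syt_decomp:
  assumes p: "partition lam" and N: "sum_list lam = Suc M"
  shows "(\<Sum>T\<in>syt lam. h T) = (\<Sum>r\<in>{r. corner lam r}. \<Sum>T'\<in>syt (dec lam r). h (T'((r, lam ! r - 1) := Suc M)))"
proof -
  let ?A = "\<lambda>r. (\<lambda>T'. T'((r, lam ! r - 1) := Suc M)) ` syt (dec lam r)"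
  have fI: "finite {r. corner lam r}" by (rule finite_subset[of _ "{..<length lam}"]) (auto simp: corner_def)
  have fA: "\<forall>r\<in>{r. corner lam r}. finite (?A r)" using finite_syt by blast
  have dj: "\<forall>r1\<in>{r. corner lam r}. \<forall>r2\<in>{r. corner lam r}. r1 \<noteq> r2 \<longrightarrow> ?A r1 \<inter> ?A r2 = {}"
  proof (intro ballI impI)
    fix r1 r2 assume r: "r1 \<in> {r. corner lam r}" "r2 \<in> {r. corner lam r}" "r1 \<noteq> r2"
    show "?A r1 \<inter> ?A r2 = {}"
    proof (rule ccontr)
      assume "?A r1 \<inter> ?A r2 \<noteq> {}"
      then obtain T1 T2 where T: "T1 \<in> syt (dec lam r1)" "T2 \<in> syt (dec lam r2)"
        "T1((r1, lam ! r1 - 1) := Suc M) = T2((r2, lam ! r2 - 1) := Suc M)" by blast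
      have "(r1, lam ! r1 - 1) = (r2, lam ! r2 - 1)"
        using inv_add(1)[OF T(1) p _ refl N] inv_add(1)[OF T(2) p _ refl N] r T(3) by simp
      then show False using r by simp
    qed
  qed
  have inj: "inj_on (\<lambda>T'. T'((r, lam ! r - 1) := Suc M)) (syt (dec lam r))" if c: "corner lam r" for r
  proof (rule inj_onI)
    fix T1 T2 assume T: "T1 \<in> syt (dec lam r)" "T2 \<in> syt (dec lam r)"
      "T1((r, lam ! r - 1) := Suc M) = T2((r, lam ! r - 1) := Suc M)"
    have nc: "(r, lam ! r - 1) \<notin> cells (dec lam r)" using cells_dec_sub[OF c] by blast
    have "T1 (r, lam ! r - 1) = T2 (r, lam ! r - 1)" using syt_out[OF T(1) nc] syt_out[OF T(2) nc] by simp
    then show "T1 = T2" using T(3) by (metis fun_upd_triv fun_upd_upd)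
  qed
  have "(\<Sum>T\<in>syt lam. h T) = (\<Sum>r\<in>{r. corner lam r}. sum h (?A r))"
    unfolding syt_decomp[OF p N] by (rule sum.UNION_disjoint[OF fI fA dj])
  also have "\<dots> = (\<Sum>r\<in>{r. corner lam r}. \<Sum>T'\<in>syt (dec lam r). h (T'((r, lam ! r - 1) := Suc M)))"
  proof (rule sum.cong[OF refl])
    fix r assume "r \<in> {r. corner lam r}"
    then have "corner lam r" by simp
    then show "sum h (?A r) = (\<Sum>T'\<in>syt (dec lam r). h (T'((r, lam ! r - 1) := Suc M)))"
      using sum.reindex[OF inj[of r], of h] by (simp add: comp_def)
  qed
  finally show ?thesis .
qed

lemma dec_nth0: "r < length lam \<Longrightarrow> dec lam r ! 0 = (if r = 0 then lam ! 0 - 1 else lam ! 0)"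
  unfolding dec_def by (simp add: nth_list_update)

lemma dec_nonempty: "lam \<noteq> [] \<Longrightarrow> dec lam r \<noteq> []"
  unfolding dec_def by simp

lemma des_bound: "partition lam \<Longrightarrow> lam \<noteq> [] \<Longrightarrow> T \<in> syt lam \<Longrightarrow> des lam T + lam ! 0 \<le> sum_list lam"
proof (induction "sum_list lam" arbitrary: lam T)
  case 0
  have s0: "sum_list lam = 0" using "0.hyps" by simp
  have "descents lam T = {}" unfolding descents_def s0 by simp
  then show ?case using 0 elem_le_sum_list[of 0 lam] by (simp add: des_def)
next
  case (Suc M)
  have N: "sum_list lam = Suc M" using Suc(2) by simp
  from Suc(5) obtain r T' where c: "corner lam r" and T': "T' \<in> syt (dec lam r)"
    and T: "T = T'((r, lam ! r - 1) := Suc M)"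
    unfolding syt_decomp[OF Suc(3) N] by blast
  have IH: "des (dec lam r) T' + dec lam r ! 0 \<le> M"
    using Suc(1)[of "dec lam r" T'] sum_dec'[OF c N] partition_dec[OF Suc(3) c] dec_nonempty[OF Suc(4)] T' by simp
  have d: "des lam T = des (dec lam r) T' + (if 1 \<le> M \<and> row_of (dec lam r) T' M < r then 1 else 0)"
    using des_maj_add(1)[OF T' Suc(3) c refl N] T by simp
  have rl: "r < length lam" "0 < lam ! r" using c by (auto simp: corner_def)
  show ?case
  proof (cases "r = 0")
    case True
    then show ?thesis using d IH dec_nth0[OF rl(1)] rl N by simp
  next
    case False
    then show ?thesis using d IH dec_nth0[OF rl(1)] rl N by simp
  qed
qed

definition full :: "nat list \<Rightarrow> (nat \<times> nat \<Rightarrow> nat) \<Rightarrow> bool" where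
  "full lam T \<longleftrightarrow> des lam T + lam ! 0 = sum_list lam"

lemma full_add:
  assumes T': "T' \<in> syt (dec lam r)" and p: "partition lam" and c: "corner lam r"
    and N: "sum_list lam = Suc M" and ne: "lam \<noteq> []"
  shows "full lam (T'((r, lam ! r - 1) := Suc M)) \<longleftrightarrow> full (dec lam r) T' \<and> (r \<noteq> 0 \<longrightarrow> 1 \<le> M \<and> row_of (dec lam r) T' M < r)"
proof -
  have B: "des (dec lam r) T' + dec lam r ! 0 \<le> M"
    using des_bound[OF partition_dec[OF p c] dec_nonempty[OF ne] T'] sum_dec'[OF c N] by simp
  have d: "des lam (T'((r, lam ! r - 1) := Suc M)) = des (dec lam r) T' + (if 1 \<le> M \<and> row_of (dec lam r) T' M < r then 1 else 0)"
    using des_maj_add(1)[OF T' p c refl N] by simp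
  have rl: "r < length lam" "0 < lam ! r" using c by (auto simp: corner_def)
  have sd: "sum_list (dec lam r) = M" using sum_dec'[OF c N] .
  show ?thesis
  proof (cases "r = 0")
    case True
    then show ?thesis unfolding full_def using d B dec_nth0[OF rl(1)] rl N sd by auto
  next
    case False
    then show ?thesis unfolding full_def using d B dec_nth0[OF rl(1)] rl N sd by auto
  qed
qed

definition FR :: "nat list \<Rightarrow> (nat \<Rightarrow> bool) \<Rightarrow> rat poly" where
  "FR lam P = (\<Sum>T\<in>syt lam. if full lam T \<and> P (row_of lam T (sum_list lam)) then monom 1 (maj lam T) else 0)"

lemma FR_rec:
  assumes p: "partition lam" and ne: "lam \<noteq> []" and N: "sum_list lam = Suc M"
  shows "FR lam P = (\<Sum>r\<in>{r. corner lam r}. if P r then (if r = 0 then FR (dec lam r) (\<lambda>_. True)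
            else monom 1 M * FR (dec lam r) (\<lambda>s. 1 \<le> M \<and> s < r)) else 0)"
proof -
  have "FR lam P = (\<Sum>r\<in>{r. corner lam r}. \<Sum>T'\<in>syt (dec lam r).
     (\<lambda>T. if full lam T \<and> P (row_of lam T (sum_list lam)) then monom 1 (maj lam T) else 0) (T'((r, lam ! r - 1) := Suc M)))"
    unfolding FR_def by (rule sum_syt_decomp[OF p N])
  also have "\<dots> = (\<Sum>r\<in>{r. corner lam r}. if P r then (if r = 0 then FR (dec lam r) (\<lambda>_. True)
            else monom 1 M * FR (dec lam r) (\<lambda>s. 1 \<le> M \<and> s < r)) else 0)"
  proof (rule sum.cong[OF refl])
    fix r assume "r \<in> {r. corner lam r}"
    then have c: "corner lam r" by simp
    have sd: "sum_list (dec lam r) = M" using sum_dec'[OF c N] .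
    let ?cc = "\<lambda>T'. 1 \<le> M \<and> row_of (dec lam r) T' M < r"
    have rowN: "row_of lam (T'((r, lam ! r - 1) := Suc M)) (sum_list lam) = r" if "T' \<in> syt (dec lam r)" for T'
      unfolding row_of_def using inv_add(1)[OF that p c refl N] N by simp
    have "(\<Sum>T'\<in>syt (dec lam r).
       (\<lambda>T. if full lam T \<and> P (row_of lam T (sum_list lam)) then monom 1 (maj lam T) else 0) (T'((r, lam ! r - 1) := Suc M)))
      = (\<Sum>T'\<in>syt (dec lam r). if full (dec lam r) T' \<and> (r \<noteq> 0 \<longrightarrow> ?cc T') \<and> P r
            then monom 1 (maj (dec lam r) T' + (if ?cc T' then M else 0)) else 0)"
    proof (rule sum.cong[OF refl])
      fix T' assume T': "T' \<in> syt (dec lam r)"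
      show "(\<lambda>T. if full lam T \<and> P (row_of lam T (sum_list lam)) then monom 1 (maj lam T) else 0) (T'((r, lam ! r - 1) := Suc M))
         = (if full (dec lam r) T' \<and> (r \<noteq> 0 \<longrightarrow> ?cc T') \<and> P r
            then monom 1 (maj (dec lam r) T' + (if ?cc T' then M else 0)) else 0)"
        using full_add[OF T' p c N ne] rowN[OF T'] des_maj_add(2)[OF T' p c refl N] by auto
    qed
    also have "\<dots> = (if P r then (if r = 0 then FR (dec lam r) (\<lambda>_. True)
            else monom 1 M * FR (dec lam r) (\<lambda>s. 1 \<le> M \<and> s < r)) else 0)"
    proof (cases "P r")
      case False then show ?thesis by simp
    next
      case True
      show ?thesis
      proof (cases "r = 0")
        case True
        have "P 0" using \<open>P r\<close> True by simp
        then show ?thesis unfolding FR_def True by (simp, intro sum.cong refl) simp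
      next
        case False
        have "(\<Sum>T'\<in>syt (dec lam r). if full (dec lam r) T' \<and> (r \<noteq> 0 \<longrightarrow> ?cc T') \<and> P r
            then monom 1 (maj (dec lam r) T' + (if ?cc T' then M else 0)) else 0)
          = (\<Sum>T'\<in>syt (dec lam r). monom (1::rat) M * (if full (dec lam r) T' \<and> ?cc T' then monom 1 (maj (dec lam r) T') else 0))"
          using False \<open>P r\<close> by (intro sum.cong refl) (auto simp: mult_monom add.commute)
        also have "\<dots> = monom 1 M * FR (dec lam r) (\<lambda>s. 1 \<le> M \<and> s < r)"
          unfolding FR_def sd by (simp add: sum_distrib_left)
        finally show ?thesis using False \<open>P r\<close> by simp
      qed
    qed
    finally show "(\<Sum>T'\<in>syt (dec lam r).
       (\<lambda>T. if full lam T \<and> P (row_of lam T (sum_list lam)) then monom 1 (maj lam T) else 0) (T'((r, lam ! r - 1) := Suc M)))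
      = (if P r then (if r = 0 then FR (dec lam r) (\<lambda>_. True)
            else monom 1 M * FR (dec lam r) (\<lambda>s. 1 \<le> M \<and> s < r)) else 0)" .
  qed
  finally show ?thesis .
qed



lemma part3: "c \<le> b \<Longrightarrow> b \<le> a \<Longrightarrow> partition [a, b, c]"
  unfolding partition_def by (auto simp: less_Suc_eq)

lemma sum_corner3:
  "(\<Sum>r\<in>{r. corner [a, b, c] r}. f r) = (if b < a then f 0 else 0) + (if c < b then f 1 else 0) + (if 0 < c then f 2 else 0)"
proof -
  have e: "{r. corner [a, b, c] r} = {r \<in> {0, 1, 2}. corner [a, b, c] r}"
    by (auto simp: corner_def less_Suc_eq)
  have "(\<Sum>r\<in>{r. corner [a, b, c] r}. f r) = (\<Sum>r\<in>{0,1,2::nat}. if corner [a, b, c] r then f r else 0)"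
    unfolding e by (rule sum.inter_filter) simp
  also have "\<dots> = (if b < a then f 0 else 0) + (if c < b then f 1 else 0) + (if 0 < c then f 2 else 0)"
    by (simp add: corner_def add.assoc)
  finally show ?thesis .
qed

lemma FR3:
  assumes "c \<le> b" "b \<le> a" "a + b + c = Suc M"
  shows "FR [a, b, c] P = (if b < a \<and> P 0 then FR [a - 1, b, c] (\<lambda>_. True) else 0)
     + (if c < b \<and> P 1 then monom 1 M * FR [a, b - 1, c] (\<lambda>s. 1 \<le> M \<and> s < 1) else 0)
     + (if 0 < c \<and> P 2 then monom 1 M * FR [a, b, c - 1] (\<lambda>s. 1 \<le> M \<and> s < 2) else 0)" (is "_ = ?R")
proof -
  have "FR [a, b, c] P = (\<Sum>r\<in>{r. corner [a, b, c] r}. if P r then (if r = 0 then FR (dec [a, b, c] r) (\<lambda>_. True)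
            else monom 1 M * FR (dec [a, b, c] r) (\<lambda>s. 1 \<le> M \<and> s < r)) else 0)"
    by (rule FR_rec[OF part3[OF assms(1,2)]]) (use assms(3) in auto)
  also have "\<dots> = ?R"
    unfolding sum_corner3 by (simp add: dec_def)
  finally show ?thesis .
qed

lemma FR_const: "FR lam (\<lambda>s. c \<and> Q s) = (if c then FR lam Q else 0)"
  unfolding FR_def by auto

lemma syt000: "syt [0, 0, 0] = {\<lambda>_. 0}"
proof -
  have ce: "cells [0, 0, 0] = {}" by (auto simp: cells_def nth_Cons split: nat.splits)
  show ?thesis
  proof (rule set_eqI)
    fix T :: "nat \<times> nat \<Rightarrow> nat"
    show "T \<in> syt [0, 0, 0] \<longleftrightarrow> T \<in> {\<lambda>_. 0}"
    proof
      assume "T \<in> syt [0, 0, 0]"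
      then have "\<And>x. T x = 0" using syt_out ce by blast
      then show "T \<in> {\<lambda>_. 0}" by auto
    next
      assume "T \<in> {\<lambda>_. 0}"
      then show "T \<in> syt [0, 0, 0]" unfolding syt_def ce by (simp add: bij_betw_def)
    qed
  qed
qed

lemma FR000: "FR [0, 0, 0] (\<lambda>_. True) = 1"
proof -
  have d: "descents [0, 0, 0] T = {}" for T unfolding descents_def by simp
  show ?thesis unfolding FR_def syt000 full_def des_def maj_def d by simp
qed

lemma GG000: "GG 0 0 0 = 1"
  unfolding GG_def PP_def by (simp add: QB_0 ee_def)

lemma mainFR: "c \<le> b \<Longrightarrow> b \<le> a \<Longrightarrow> FR [a, b, c] (\<lambda>_. True) = GG a (int b) (int c)"
proof (induction "a + b + c" arbitrary: a b c rule: less_induct)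
  case less
  have IH: "\<And>a' b' c'. a' + b' + c' < a + b + c \<Longrightarrow> c' \<le> b' \<Longrightarrow> b' \<le> a' \<Longrightarrow>
      FR [a', b', c'] (\<lambda>_. True) = GG a' (int b') (int c')"
    using less.hyps by blast
  show ?case
  proof (cases "a + b + c")
    case 0
    then have "a = 0" "b = 0" "c = 0" by auto
    then show ?thesis using FR000 GG000 by simp
  next
    case (Suc M)
    have "0 < a" using Suc less.prems by auto
    then obtain m where a: "a = Suc m" using not0_implies_Suc by blast
    have NM: "nat (int a + int b + int c - 1) = M" using Suc by simp
    have E: "FR [a, b, c] (\<lambda>_. True) = (if b < a then FR [m, b, c] (\<lambda>_. True) else 0)
       + (if c < b then monom 1 M * FR [a, b - 1, c] (\<lambda>s. 1 \<le> M \<and> s < 1) else 0)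
       + (if 0 < c then monom 1 M * FR [a, b, c - 1] (\<lambda>s. 1 \<le> M \<and> s < 2) else 0)"
      using FR3[OF less.prems Suc, of "\<lambda>_. True"] a by simp
    have T1: "(if b < a then FR [m, b, c] (\<lambda>_. True) else 0) = GG m (int b) (int c)"
    proof (cases "b < a")
      case True
      then show ?thesis using IH[of m b c] a less.prems by simp
    next
      case False
      then have "int b = int m + 1" using a less.prems by simp
      then show ?thesis using False GG_z1[of m "int c"] by simp
    qed
    have T2: "(if c < b then monom 1 M * FR [a, b - 1, c] (\<lambda>s. 1 \<le> M \<and> s < 1) else 0)
        = monom 1 M * GG m (int b - 1) (int c)"
    proof (cases "c < b")
      case True
      then have M1: "1 \<le> M" using Suc less.prems by simp
      have s: "a + (b - 1) + c = Suc (M - 1)" using Suc True M1 by simp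
      have "FR [a, b - 1, c] (\<lambda>s. 1 \<le> M \<and> s < 1) = FR [a, b - 1, c] (\<lambda>s. s < 1)"
        using M1 FR_const[of "[a, b - 1, c]" "1 \<le> M" "\<lambda>s. s < 1"] by simp
      also have "\<dots> = FR [m, b - 1, c] (\<lambda>_. True)"
        using FR3[of c "b - 1" a "M - 1" "\<lambda>s. s < 1"] True less.prems s a by simp
      also have "\<dots> = GG m (int b - 1) (int c)"
        using IH[of m "b - 1" c] True less.prems a by (simp add: of_nat_diff)
      finally show ?thesis using True by simp
    next
      case False
      then have "int c = (int b - 1) + 1" using less.prems by simp
      then show ?thesis using False GG_z2[of m "int b - 1"] by simp
    qed
    have T34: "(if 0 < c then monom 1 M * FR [a, b, c - 1] (\<lambda>s. 1 \<le> M \<and> s < 2) else 0)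
        = monom 1 M * GG m (int b) (int c - 1) + monom 1 (nat (2 * (int a + int b + int c) - 3)) * GG m (int b - 1) (int c - 1)"
    proof (cases "0 < c")
      case False
      then show ?thesis using GG_z3[of m "int b"] GG_z3[of m "int b - 1"] by simp
    next
      case True
      then have M2: "2 \<le> M" using Suc less.prems by simp
      have "c - 1 < b" using True less.prems by simp
      have s1: "a + b + (c - 1) = Suc (M - 1)" using Suc True M2 by simp
      have s2: "a + (b - 1) + (c - 1) = Suc (M - 2)" using Suc True less.prems by simp
      have A: "(if b < a then FR [m, b, c - 1] (\<lambda>_. True) else 0) = GG m (int b) (int c - 1)"
      proof (cases "b < a")
        case True
        then show ?thesis using IH[of m b "c - 1"] a less.prems \<open>0 < c\<close> by (simp add: of_nat_diff)
      next
        case False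
        then have "int b = int m + 1" using a less.prems by simp
        then show ?thesis using False GG_z1[of m "int c - 1"] by simp
      qed
      have B: "FR [a, b - 1, c - 1] (\<lambda>s. 1 \<le> M - 1 \<and> s < 1) = GG m (int b - 1) (int c - 1)"
      proof -
        have "FR [a, b - 1, c - 1] (\<lambda>s. 1 \<le> M - 1 \<and> s < 1) = FR [a, b - 1, c - 1] (\<lambda>s. s < 1)"
          using M2 FR_const[of "[a, b - 1, c - 1]" "1 \<le> M - 1" "\<lambda>s. s < 1"] by simp
        also have "\<dots> = FR [m, b - 1, c - 1] (\<lambda>_. True)"
          using FR3[of "c - 1" "b - 1" a "M - 2" "\<lambda>s. s < 1"] True less.prems s2 a by simp
        also have "\<dots> = GG m (int b - 1) (int c - 1)"
          using IH[of m "b - 1" "c - 1"] True less.prems a by (simp add: of_nat_diff)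
        finally show ?thesis .
      qed
      have "FR [a, b, c - 1] (\<lambda>s. 1 \<le> M \<and> s < 2) = FR [a, b, c - 1] (\<lambda>s. s < 2)"
        using M2 FR_const[of "[a, b, c - 1]" "1 \<le> M" "\<lambda>s. s < 2"] by simp
      also have "\<dots> = (if b < a then FR [m, b, c - 1] (\<lambda>_. True) else 0)
          + monom 1 (M - 1) * FR [a, b - 1, c - 1] (\<lambda>s. 1 \<le> M - 1 \<and> s < 1)"
        using FR3[of "c - 1" b a "M - 1" "\<lambda>s. s < 2"] True less.prems s1 a \<open>c - 1 < b\<close> by simp
      also have "\<dots> = GG m (int b) (int c - 1) + monom 1 (M - 1) * GG m (int b - 1) (int c - 1)"
        using A B by simp
      finally have F: "FR [a, b, c - 1] (\<lambda>s. 1 \<le> M \<and> s < 2) = GG m (int b) (int c - 1) + monom 1 (M - 1) * GG m (int b - 1) (int c - 1)" .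
      have "nat (2 * (int a + int b + int c) - 3) = M + (M - 1)" using Suc M2 by simp
      then have "monom (1::rat) M * monom 1 (M - 1) = monom 1 (nat (2 * (int a + int b + int c) - 3))"
        by (simp add: mult_monom)
      then show ?thesis using True F by (simp add: algebra_simps)
    qed
    have "FR [a, b, c] (\<lambda>_. True) = GG m (int b) (int c) + monom 1 M * GG m (int b - 1) (int c)
        + (monom 1 M * GG m (int b) (int c - 1) + monom 1 (nat (2 * (int a + int b + int c) - 3)) * GG m (int b - 1) (int c - 1))"
      using E T1 T2 T34 by simp
    also have "\<dots> = GG a (int b) (int c)"
      using GG_rec[of m "int b" "int c"] a NM by (simp add: algebra_simps)
    finally show ?thesis .
  qed
qed



lemma fpoly_FR: "fpoly [n, j, k] (j + k) = FR [n, j, k] (\<lambda>_. True)"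
proof -
  have "fpoly [n, j, k] (j + k) = (\<Sum>T\<in>syt [n, j, k]. if des [n, j, k] T = j + k then monom 1 (maj [n, j, k] T) else 0)"
    unfolding fpoly_def by (rule sum.inter_filter[OF finite_syt])
  also have "\<dots> = FR [n, j, k] (\<lambda>_. True)"
    unfolding FR_def full_def by (intro sum.cong refl) auto
  finally show ?thesis .
qed

theorem mainTheorem8:
  fixes n j k :: nat
  assumes "j \<le> n" and "k \<le> j"
  shows "fpoly [n, j, k] (j + k) =
    monom 1 (j^2 + j*k + k^2) *
      (qbinom (int n) (int j) * qbinom (int n) (int k)
       - monom 1 (j - k + 1) * qbinom (int n) (int j + 1) * qbinom (int n) (int k - 1))"
proof -
  have e1: "ee (int j) (int k) = int (j^2 + j*k + k^2)" unfolding ee_def by simp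
  have e2: "ee (int j + 1) (int k - 1) = int ((j^2 + j*k + k^2) + (j - k + 1))"
    using assms(2) unfolding ee_def by (simp add: of_nat_diff algebra_simps power2_eq_square)
  have "fpoly [n, j, k] (j + k) = GG n (int j) (int k)"
    using fpoly_FR mainFR[OF assms(2,1)] by simp
  also have "\<dots> = monom 1 (j^2 + j*k + k^2) * QB n (int j) * QB n (int k)
      - monom 1 ((j^2 + j*k + k^2) + (j - k + 1)) * QB n (int j + 1) * QB n (int k - 1)"
    unfolding GG_def PP_def e1 e2 nat_int by simp
  also have "\<dots> = monom 1 (j^2 + j*k + k^2) *
      (qbinom (int n) (int j) * qbinom (int n) (int k)
       - monom 1 (j - k + 1) * qbinom (int n) (int j + 1) * qbinom (int n) (int k - 1))"
    unfolding qbinom_QB by (simp add: algebra_simps mult_monom)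
  finally show ?thesis .
qed

end
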